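(* Let $F$ be an isotropic random field on $\mathcal S^N$ that is almost surely continuous, and let $\mathbf n=(\sqrt N,0,\dots,0)$. Suppose: (1) for every $c>0$ there is $c_1(c)>0$ such that for every $\delta>0$, $\mathbb P(|F(\mathbf n)-\mathbb E F(\mathbf n)|\ge cN^{1/2+\delta})\lesssim e^{-c_1N^{1+2\delta}}$; (2) there is $\alpha>0$ and for every $c>0$ a $c_2(c)>0$ such that for every $\delta>0$, $\mathbb P(\sup_{x,y:R(x,y)\ge1-N^{-\alpha}}|F(x)-F(y)|\ge cN^{1/2+\delta})\lesssim e^{-c_2N^{1+2\delta}}$. Then for every $c>0$ there is $f(c)>0$ (depending on $c_1,c_2$) such that for every $\delta>0$, $\mathbb P(\sup_{x\in\mathcal S^N}|F(x)-\mathbb E F(\mathbf n)|\ge cN^{1/2+\delta})\lesssim e^{-f(c)N^{1+2\delta}}$. Moreover, if $F\ge0$ almost surely, $\mathbb EF(\mathbf n)=O(\sqrt N)$, (1) holds, and (2) is replaced by (2'): there is $\alpha>0$ and for every $c>0$ a $c_2(c)>0$ such that for every $\delta>0$, $\mathbb P(\sup_{x,y:R(x,y)\ge1-N^{-\alpha}}|F^2(x)-F^2(y)|\ge cN^{1+2\delta})\lesssim e^{-c_2N^{1+2\delta}}$, then for every $c>0$ there is $f(c)>0$ such that for every $\delta>0$, $\mathbb P(\sup_{x\in\mathcal S^N}F(x)\ge cN^{1/2+\delta})\lesssim e^{-f(c)N^{1+2\delta}}$.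
   Context: $\mathcal S^N=\{x\in\mathbb R^N:\sum x_i^2=N\}$; $R(x,y)=\frac1N\sum_ix_iy_i$ is the normalized overlap. A random field on $\mathcal S^N$ is isotropic if its law is invariant under orthogonal transformations of $\mathbb R^N$. The symbol $\lesssim$ means inequality up to a constant independent of $N$. *)

theory Defs
  imports "HOL-Probability.Probability"
begin

text \<open>Vectors of R^N are represented as functions nat => real vanishing at indices >= N.\<close>

definition sphereN :: "nat \<Rightarrow> (nat \<Rightarrow> real) set" where
  "sphereN N = {x. (\<forall>i\<ge>N. x i = 0) \<and> (\<Sum>i<N. (x i)^2) = real N}"

definition overlap :: "nat \<Rightarrow> (nat \<Rightarrow> real) \<Rightarrow> (nat \<Rightarrow> real) \<Rightarrow> real" where
  "overlap N x y = (\<Sum>i<N. x i * y i) / real N"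

definition northpole :: "nat \<Rightarrow> (nat \<Rightarrow> real)" where
  "northpole N = (\<lambda>i. if i = 0 then sqrt (real N) else 0)"

definition orthogonal_matN :: "nat \<Rightarrow> (nat \<Rightarrow> nat \<Rightarrow> real) \<Rightarrow> bool" where
  "orthogonal_matN N U \<longleftrightarrow>
     (\<forall>i<N. \<forall>j<N. (\<Sum>k<N. U k i * U k j) = (if i = j then 1 else 0))"

definition matvecN :: "nat \<Rightarrow> (nat \<Rightarrow> nat \<Rightarrow> real) \<Rightarrow> (nat \<Rightarrow> real) \<Rightarrow> (nat \<Rightarrow> real)" where
  "matvecN N U x = (\<lambda>i. if i < N then (\<Sum>j<N. U i j * x j) else 0)"

definition isotropic_field :: "'w measure \<Rightarrow> nat \<Rightarrow> ('w \<Rightarrow> (nat \<Rightarrow> real) \<Rightarrow> real) \<Rightarrow> bool" where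
  "isotropic_field M N F \<longleftrightarrow>
     (\<forall>x\<in>sphereN N. (\<lambda>\<omega>. F \<omega> x) \<in> borel_measurable M) \<and>
     (\<forall>U (k::nat) (xs :: nat \<Rightarrow> nat \<Rightarrow> real). orthogonal_matN N U \<longrightarrow> (\<forall>i<k. xs i \<in> sphereN N) \<longrightarrow>
        distr M (Pi\<^sub>M {..<k} (\<lambda>_. (borel :: real measure))) (\<lambda>\<omega>. \<lambda>i\<in>{..<k}. F \<omega> (xs i))
      = distr M (Pi\<^sub>M {..<k} (\<lambda>_. (borel :: real measure))) (\<lambda>\<omega>. \<lambda>i\<in>{..<k}. F \<omega> (matvecN N U (xs i))))"

text \<open>Outer probability (events defined by suprema need not be measurable a priori).\<close>
definition outer_prob :: "'w measure \<Rightarrow> 'w set \<Rightarrow> real" where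
  "outer_prob M A = Inf {measure M B | B. B \<in> sets M \<and> A \<inter> space M \<subseteq> B}"

end

theory Submission
  imports Defs "HOL-Real_Asymp.Real_Asymp"
begin


lemma growth:
  assumes "b > 0" "d > 0"
  shows "\<exists>K. \<forall>N::nat\<ge>1. real N*(A + a*ln (real N)) - b * real N powr (1+2*d) \<le> K"
proof -
  have "filterlim (\<lambda>x::real. x*(A + a*ln x) - b * x powr (1+2*d)) at_bot at_top"
    using assms by real_asymp
  from this[unfolded filterlim_at_bot, rule_format, of 0]
  have "eventually (\<lambda>x::real. x*(A + a*ln x) - b * x powr (1+2*d) \<le> 0) at_top" .
  then obtain X where X: "\<And>x. x \<ge> X \<Longrightarrow> x*(A + a*ln x) - b * x powr (1+2*d) \<le> 0"
    by (auto simp: eventually_at_top_linorder)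
  define g where "g = (\<lambda>N::nat. real N*(A + a*ln (real N)) - b * real N powr (1+2*d))"
  obtain n0 :: nat where n0: "X \<le> real n0" using real_arch_simple by blast
  define K where "K = max 0 (Max (g ` {..n0}))"
  have "\<forall>N::nat\<ge>1. g N \<le> K"
  proof (intro allI impI)
    fix N :: nat assume "N \<ge> 1"
    show "g N \<le> K"
    proof (cases "N \<le> n0")
      case True then show ?thesis unfolding K_def by (intro max.coboundedI2 Max_ge) auto
    next
      case False then have "real N \<ge> X" using n0 by linarith
      then show ?thesis using X[of "real N"] unfolding K_def g_def by auto
    qed
  qed
  then show ?thesis unfolding g_def by blast
qed

lemma op_le_measure:
  assumes "B \<in> sets M" "A \<inter> space M \<subseteq> B"
  shows "outer_prob M A \<le> measure M B"
  unfolding outer_prob_def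
  by (rule cInf_lower) (use assms in \<open>auto intro!: bdd_belowI[where m=0]\<close>)

lemma op_nonneg: "outer_prob M A \<ge> 0"
  unfolding outer_prob_def
  by (rule cInf_greatest) (auto intro!: exI[where x="space M"])

lemma op_le_1:
  assumes "prob_space M" shows "outer_prob M A \<le> 1"
proof -
  have "outer_prob M A \<le> measure M (space M)" by (rule op_le_measure) auto
  then show ?thesis using prob_space.prob_space[OF assms] by simp
qed

lemma op_union:
  assumes "G \<in> sets M" "A \<inter> space M \<subseteq> G \<union> O'"
  shows "outer_prob M A \<le> measure M G + outer_prob M O'"
proof -
  have "outer_prob M A - measure M G \<le> outer_prob M O'"
    unfolding outer_prob_def[of M O']
  proof (rule cInf_greatest)
    show "{measure M B |B. B \<in> sets M \<and> O' \<inter> space M \<subseteq> B} \<noteq> {}"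
      by (auto intro!: exI[where x="space M"])
  next
    fix m assume "m \<in> {measure M B |B. B \<in> sets M \<and> O' \<inter> space M \<subseteq> B}"
    then obtain B where B: "B \<in> sets M" "O' \<inter> space M \<subseteq> B" "m = measure M B" by auto
    have "outer_prob M A \<le> measure M (G \<union> B)"
      by (rule op_le_measure) (use assms B in auto)
    also have "\<dots> \<le> measure M G + measure M B"
      using assms B by (intro measure_Un_le) auto
    finally show "outer_prob M A - measure M G \<le> m" using B by simp
  qed
  then show ?thesis by simp
qed



lemma sum_delta_left: "i < (N::nat) \<Longrightarrow> (\<Sum>k<N. (if k = i then 1 else 0) * g k) = (g i :: real)"
proof -
  assume "i < N"
  have "(\<Sum>k<N. (if k = i then 1 else 0) * g k) = (\<Sum>k<N. if k = i then g k else 0)"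
    by (intro sum.cong) auto
  then show ?thesis using \<open>i < N\<close> sum.delta[of "{..<N}" i g] by simp
qed

lemma sum_delta_right: "i < (N::nat) \<Longrightarrow> (\<Sum>k<N. (if i = k then 1 else 0) * g k) = (g i :: real)"
  using sum_delta_left[of i N g] by (simp add: eq_commute)

lemma sum_np: "N \<ge> 1 \<Longrightarrow> (\<Sum>j<N. northpole N j * g j) = sqrt (real N) * g 0"
proof -
  assume "N \<ge> 1"
  then have "(\<Sum>j<N. northpole N j * g j) = (\<Sum>j<N. if j = 0 then sqrt (real N) * g 0 else 0)"
    by (intro sum.cong) (auto simp: northpole_def)
  also have "\<dots> = sqrt (real N) * g 0" using \<open>N \<ge> 1\<close> by (simp add: sum.delta)
  finally show ?thesis .
qed

lemma orth_exists:
  assumes N: "N \<ge> 1" and p: "p \<in> sphereN N"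
  shows "\<exists>U. orthogonal_matN N U \<and> matvecN N U (northpole N) = p"
proof (cases "p = northpole N")
  case True
  define U where "U = (\<lambda>i j::nat. if i = j then 1 else (0::real))"
  have "orthogonal_matN N U" unfolding orthogonal_matN_def U_def
    using sum_delta_left[of _ N "\<lambda>k. if k = _ then 1 else 0"] by auto
  moreover have "matvecN N U (northpole N) = p"
  proof
    fix i show "matvecN N U (northpole N) i = p i"
      using p True sum_delta_right[of i N "northpole N"] unfolding matvecN_def U_def sphereN_def
      by auto
  qed
  ultimately show ?thesis by blast
next
  case False
  let ?n = "northpole N"
  have p0: "\<forall>i\<ge>N. p i = 0" and p2: "(\<Sum>i<N. (p i)^2) = real N" using p by (auto simp: sphereN_def)
  define v where "v = (\<lambda>i. ?n i - p i)"
  define s where "s = (\<Sum>k<N. (v k)^2)"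
  obtain i0 where "p i0 \<noteq> ?n i0" using False by auto
  then have "i0 < N" using p0 N by (cases "i0 < N") (auto simp: northpole_def)
  have "s > 0" unfolding s_def
  proof (rule sum_pos2[where i=i0])
    show "0 < (v i0)^2" using \<open>p i0 \<noteq> ?n i0\<close> by (simp add: v_def)
  qed (use \<open>i0 < N\<close> in auto)
  have n2: "(\<Sum>i<N. (?n i)^2) = real N"
    using sum_np[OF N, of ?n] N by (simp add: power2_eq_square northpole_def)
  have vn: "(\<Sum>j<N. v j * ?n j) = real N - sqrt (real N) * p 0"
    using sum_np[OF N, of v] N by (simp add: mult.commute v_def northpole_def right_diff_distrib)
  have s_eq: "s = 2 * (real N - sqrt (real N) * p 0)"
  proof -
    have "s = (\<Sum>k<N. (?n k)^2) + (\<Sum>k<N. (p k)^2) - 2 * (\<Sum>k<N. ?n k * p k)"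
      unfolding s_def v_def by (simp add: power2_diff sum.distrib sum_subtractf sum_distrib_left mult.assoc)
    also have "(\<Sum>k<N. ?n k * p k) = sqrt (real N) * p 0" by (rule sum_np[OF N])
    finally show ?thesis using n2 p2 by simp
  qed
  define U where "U = (\<lambda>i j::nat. (if i = j then 1 else 0) - 2 * v i * v j / s)"
  have "orthogonal_matN N U" unfolding orthogonal_matN_def
  proof (intro allI impI)
    fix i j assume ij: "i < N" "j < N"
    have "(\<Sum>k<N. U k i * U k j) = (\<Sum>k<N. (if k = i then 1 else 0) * (if k = j then 1 else 0)
        - (if k = i then 1 else 0) * (2 * v k * v j / s) - (if k = j then 1 else 0) * (2 * v k * v i / s)
        + (4 * v i * v j / s^2) * (v k)^2)"
      unfolding U_def by (intro sum.cong) (auto simp: algebra_simps power2_eq_square)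
    also have "\<dots> = (if i = j then 1 else 0) - 2 * v i * v j / s - 2 * v j * v i / s + (4 * v i * v j / s^2) * s"
      unfolding sum.distrib sum_subtractf
      using ij sum_delta_left[of i N "\<lambda>k. if k = j then 1 else 0"]
        sum_delta_left[of i N "\<lambda>k. 2 * v k * v j / s"]
        sum_delta_left[of j N "\<lambda>k. 2 * v k * v i / s"]
        sum_distrib_left[of "4 * v i * v j / s^2" "\<lambda>k. (v k)^2" "{..<N}", symmetric]
      unfolding s_def[symmetric] by simp
    also have "\<dots> = (if i = j then 1 else 0)" using \<open>s > 0\<close> by (simp add: power2_eq_square field_simps)
    finally show "(\<Sum>k<N. U k i * U k j) = (if i = j then 1 else 0)" .
  qed
  moreover have "matvecN N U ?n = p"
  proof
    fix i
    show "matvecN N U ?n i = p i"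
    proof (cases "i < N")
      case True
      have "(\<Sum>j<N. U i j * ?n j) = (\<Sum>j<N. (if i = j then 1 else 0) * ?n j) - 2 * v i / s * (\<Sum>j<N. v j * ?n j)"
        unfolding U_def by (simp add: algebra_simps sum_subtractf sum_distrib_left)
      also have "(\<Sum>j<N. (if i = j then 1 else 0) * ?n j) = ?n i"
        using True by (rule sum_delta_right)
      also have "2 * v i / s * (\<Sum>j<N. v j * ?n j) = v i"
        using vn s_eq \<open>s > 0\<close> by (simp add: field_simps)
      finally show ?thesis using True by (simp add: matvecN_def v_def)
    qed (use p0 in \<open>simp add: matvecN_def\<close>)
  qed
  ultimately show ?thesis by blast
qed



lemma northpole_sphere: "N \<ge> 1 \<Longrightarrow> northpole N \<in> sphereN N"
  using sum_np[of N "northpole N"] by (auto simp: sphereN_def northpole_def power2_eq_square)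

lemma iso_event:
  assumes iso: "isotropic_field M N F" and N: "N \<ge> 1" and p: "p \<in> sphereN N"
    and P: "Collect P \<in> sets borel"
  shows "measure M {\<omega>\<in>space M. P (F \<omega> p)} = measure M {\<omega>\<in>space M. P (F \<omega> (northpole N))}"
proof -
  obtain U where U: "orthogonal_matN N U" "matvecN N U (northpole N) = p"
    using orth_exists[OF N p] by blast
  have meas: "\<And>x. x \<in> sphereN N \<Longrightarrow> (\<lambda>\<omega>. F \<omega> x) \<in> borel_measurable M"
    using iso by (auto simp: isotropic_field_def)
  let ?PM = "Pi\<^sub>M {..<1::nat} (\<lambda>_. (borel :: real measure))"
  have eq: "distr M ?PM (\<lambda>\<omega>. \<lambda>i\<in>{..<1::nat}. F \<omega> (northpole N))
          = distr M ?PM (\<lambda>\<omega>. \<lambda>i\<in>{..<1::nat}. F \<omega> p)"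
  proof -
    have H: "\<forall>U (k::nat) (xs :: nat \<Rightarrow> nat \<Rightarrow> real). orthogonal_matN N U \<longrightarrow> (\<forall>i<k. xs i \<in> sphereN N) \<longrightarrow>
        distr M (Pi\<^sub>M {..<k} (\<lambda>_. (borel :: real measure))) (\<lambda>\<omega>. \<lambda>i\<in>{..<k}. F \<omega> (xs i))
      = distr M (Pi\<^sub>M {..<k} (\<lambda>_. (borel :: real measure))) (\<lambda>\<omega>. \<lambda>i\<in>{..<k}. F \<omega> (matvecN N U (xs i)))"
      using iso unfolding isotropic_field_def by blast
    from H[rule_format, OF U(1), of 1 "\<lambda>_. northpole N"] northpole_sphere[OF N] U(2)
    show ?thesis by simp
  qed
  define S where "S = (\<lambda>f::nat\<Rightarrow>real. f 0) -` Collect P \<inter> space ?PM"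
  have S: "S \<in> sets ?PM" unfolding S_def
    by (rule measurable_sets[OF measurable_component_singleton[of 0 "{..<1::nat}" "\<lambda>_. (borel :: real measure)"]]) (use P in simp_all)
  have m: "\<And>x. x \<in> sphereN N \<Longrightarrow> (\<lambda>\<omega>. \<lambda>i\<in>{..<1::nat}. F \<omega> x) \<in> measurable M ?PM"
    by (rule measurable_restrict) (use meas in auto)
  have pre: "\<And>x. (\<lambda>\<omega>. \<lambda>i\<in>{..<1::nat}. F \<omega> x) -` S \<inter> space M = {\<omega>\<in>space M. P (F \<omega> x)}"
    unfolding S_def by (auto simp: space_PiM)
  have "measure M {\<omega>\<in>space M. P (F \<omega> (northpole N))} = measure (distr M ?PM (\<lambda>\<omega>. \<lambda>i\<in>{..<1::nat}. F \<omega> (northpole N))) S"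
    using measure_distr[OF m[OF northpole_sphere[OF N]] S] pre by simp
  also have "\<dots> = measure (distr M ?PM (\<lambda>\<omega>. \<lambda>i\<in>{..<1::nat}. F \<omega> p)) S" using eq by simp
  also have "\<dots> = measure M {\<omega>\<in>space M. P (F \<omega> p)}"
    using measure_distr[OF m[OF p] S] pre by simp
  finally show ?thesis by simp
qed



definition rnd :: "nat \<Rightarrow> real \<Rightarrow> (nat \<Rightarrow> real) \<Rightarrow> (nat \<Rightarrow> real)" where
  "rnd N h x = (\<lambda>i. if i < N then h * of_int (round (x i / h)) else 0)"

definition l2 :: "nat \<Rightarrow> (nat \<Rightarrow> real) \<Rightarrow> real" where
  "l2 N x = L2_set x {..<N}"

definition proj :: "nat \<Rightarrow> (nat \<Rightarrow> real) \<Rightarrow> (nat \<Rightarrow> real)" where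
  "proj N q = (\<lambda>i. sqrt (real N) / l2 N q * q i)"

lemma l2_tri: "l2 N (\<lambda>i. f i + g i) \<le> l2 N f + l2 N g"
  unfolding l2_def by (rule L2_set_triangle_ineq)

lemma l2_scale: "l2 N (\<lambda>i. c * f i) = \<bar>c\<bar> * l2 N f"
proof -
  have "l2 N (\<lambda>i. c * f i) = l2 N (\<lambda>i. \<bar>c\<bar> * f i)"
    unfolding l2_def L2_set_def by (simp add: power_mult_distrib)
  also have "\<dots> = \<bar>c\<bar> * l2 N f" unfolding l2_def by (simp add: L2_set_right_distrib)
  finally show ?thesis .
qed

lemma l2_sphere: "x \<in> sphereN N \<Longrightarrow> l2 N x = sqrt (real N)"
  by (simp add: l2_def L2_set_def sphereN_def)

lemma l2_nonneg: "l2 N x \<ge> 0" by (simp add: l2_def)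

lemma l2_sq: "(l2 N x)^2 = (\<Sum>i<N. (x i)^2)"
  by (simp add: l2_def L2_set_def sum_nonneg)

lemma rnd_err:
  assumes h: "h > 0"
  shows "l2 N (\<lambda>i. x i - rnd N h x i) \<le> sqrt (real N) * h / 2"
proof -
  have b: "(x i - rnd N h x i)^2 \<le> (h/2)^2" if "i < N" for i
  proof -
    have "\<bar>of_int (round (x i / h)) - x i / h\<bar> \<le> 1/2" by (rule of_int_round_abs_le)
    then have "\<bar>h * of_int (round (x i / h)) - x i\<bar> \<le> h/2"
    proof -
      assume a: "\<bar>of_int (round (x i / h)) - x i / h\<bar> \<le> 1/2"
      have "h * of_int (round (x i / h)) - x i = h * (of_int (round (x i / h)) - x i / h)"
        using h by (simp add: field_simps)
      then show ?thesis using a h by (simp add: abs_mult)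
    qed
    then have "\<bar>x i - rnd N h x i\<bar> \<le> h/2" using that by (simp add: rnd_def abs_minus_commute)
    then show ?thesis by (metis abs_ge_zero abs_le_square_iff abs_of_nonneg order.trans)
  qed
  have "(\<Sum>i<N. (x i - rnd N h x i)^2) \<le> real N * (h/2)^2"
    using sum_bounded_above[of "{..<N}" "\<lambda>i. (x i - rnd N h x i)^2" "(h/2)^2"] b by simp
  then have "l2 N (\<lambda>i. x i - rnd N h x i) \<le> sqrt (real N * (h/2)^2)"
    unfolding l2_def L2_set_def by (rule real_sqrt_le_mono)
  also have "\<dots> = sqrt (real N) * h / 2" using h by (simp add: real_sqrt_mult)
  finally show ?thesis .
qed

lemma net_point:
  assumes N: "N \<ge> 1" and h: "0 < h" "h \<le> 1" and x: "x \<in> sphereN N"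
  defines "q \<equiv> rnd N h x"
  shows "proj N q \<in> sphereN N" "overlap N x (proj N q) \<ge> 1 - h^2"
proof -
  let ?d = "\<lambda>i. x i - q i"
  let ?s = "sqrt (real N)"
  have sN: "?s > 0" using N by simp
  have d: "l2 N ?d \<le> ?s * h / 2" unfolding q_def by (rule rnd_err[OF h(1)])
  have lx: "l2 N x = ?s" using x by (rule l2_sphere)
  have "l2 N x \<le> l2 N q + l2 N ?d" using l2_tri[of N q ?d] by simp
  moreover have "l2 N q \<le> l2 N x + l2 N (\<lambda>i. - ?d i)" using l2_tri[of N x "\<lambda>i. - ?d i"] by simp
  moreover have "l2 N (\<lambda>i. - ?d i) = l2 N ?d" using l2_scale[of N "-1" ?d] by simp
  ultimately have dq: "\<bar>l2 N q - ?s\<bar> \<le> l2 N ?d" using lx by linarith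
  have "?s * h / 2 < ?s" using sN h by (simp add: field_simps)
  then have lq: "l2 N q > 0" using dq d by linarith
  define p where "p = proj N q"
  have p: "p = (\<lambda>i. (?s / l2 N q) * q i)" by (simp add: p_def proj_def)
  have q0: "\<forall>i\<ge>N. q i = 0" by (simp add: q_def rnd_def)
  have "(\<Sum>i<N. (p i)^2) = (?s / l2 N q)^2 * (\<Sum>i<N. (q i)^2)"
    unfolding p sum_distrib_left by (intro sum.cong) (auto simp: power_mult_distrib power_divide)
  also have "\<dots> = real N" using lq by (simp add: l2_sq[symmetric] power_divide)
  finally have p2: "(\<Sum>i<N. (p i)^2) = real N" .
  show "proj N q \<in> sphereN N" using p2 q0 by (simp add: sphereN_def p_def[symmetric] p)
  have "l2 N (\<lambda>i. x i - p i) \<le> l2 N ?d + l2 N (\<lambda>i. (1 - ?s / l2 N q) * q i)"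
    using l2_tri[of N ?d "\<lambda>i. (1 - ?s / l2 N q) * q i"] by (simp add: p algebra_simps)
  also have "l2 N (\<lambda>i. (1 - ?s / l2 N q) * q i) = \<bar>l2 N q - ?s\<bar>"
  proof -
    have "\<bar>1 - ?s / l2 N q\<bar> * l2 N q = \<bar>(1 - ?s / l2 N q) * l2 N q\<bar>" using lq by (simp add: abs_mult)
    also have "(1 - ?s / l2 N q) * l2 N q = l2 N q - ?s" using lq by (simp add: field_simps)
    finally show ?thesis by (simp add: l2_scale)
  qed
  finally have "l2 N (\<lambda>i. x i - p i) \<le> ?s * h" using dq d by linarith
  then have "(l2 N (\<lambda>i. x i - p i))^2 \<le> (?s * h)^2"
    using l2_nonneg by (intro power_mono) auto
  then have dd: "(\<Sum>i<N. (x i - p i)^2) \<le> real N * h^2"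
    by (simp add: l2_sq power_mult_distrib)
  have x2: "(\<Sum>i<N. (x i)^2) = real N" using x by (simp add: sphereN_def)
  have "(\<Sum>i<N. (x i - p i)^2) = (\<Sum>i<N. (x i)^2) + (\<Sum>i<N. (p i)^2) - 2 * (\<Sum>i<N. x i * p i)"
    by (simp add: power2_diff sum.distrib sum_subtractf sum_distrib_left mult.assoc)
  then have "(\<Sum>i<N. x i * p i) \<ge> real N - real N * h^2 / 2" using dd x2 p2 by linarith
  then have "overlap N x p \<ge> (real N - real N * h^2 / 2) / real N"
    unfolding overlap_def using N by (intro divide_right_mono) auto
  moreover have "(real N - real N * h^2 / 2) / real N = 1 - h^2/2" using N by (simp add: field_simps)
  ultimately show "overlap N x (proj N q) \<ge> 1 - h^2" unfolding p_def
    using zero_le_power2[of h] by linarith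
qed



lemma coord_bound: "x \<in> sphereN N \<Longrightarrow> i < N \<Longrightarrow> \<bar>x i\<bar> \<le> sqrt (real N)"
proof -
  assume x: "x \<in> sphereN N" and i: "i < N"
  have "(x i)^2 \<le> (\<Sum>j<N. (x j)^2)" using i by (intro member_le_sum) auto
  then have "(x i)^2 \<le> real N" using x by (simp add: sphereN_def)
  then show ?thesis by (simp add: real_le_rsqrt)
qed

lemma net_card:
  fixes N :: nat
  assumes h: "h > 0"
  defines "m \<equiv> \<lceil>sqrt (real N) / h\<rceil> + 1"
  shows "finite ((\<lambda>x. proj N (rnd N h x)) ` sphereN N)"
    "card ((\<lambda>x. proj N (rnd N h x)) ` sphereN N) \<le> (nat (2*m+1))^N"
proof -
  define G :: "(nat \<Rightarrow> real) set" where "G = (\<lambda>k. \<lambda>i. if i<N then h * of_int (k i) else 0) ` PiE {..<N} (\<lambda>_. {-m..m})"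
  have fG: "finite G" unfolding G_def by (intro finite_imageI finite_PiE) auto
  have cG: "card G \<le> (nat (2*m+1))^N"
  proof -
    have "card G \<le> card (PiE {..<N} (\<lambda>_. {-m..m}))" unfolding G_def
      by (rule card_image_le) (intro finite_PiE; auto)
    also have "\<dots> = (nat (2*m+1))^N" by (simp add: card_PiE)
    finally show ?thesis .
  qed
  have sub: "rnd N h ` sphereN N \<subseteq> G"
  proof
    fix y assume "y \<in> rnd N h ` sphereN N"
    then obtain x where x: "x \<in> sphereN N" and y: "y = rnd N h x" by auto
    define k where "k = restrict (\<lambda>i. round (x i / h)) {..<N}"
    have "k \<in> PiE {..<N} (\<lambda>_. {-m..m})"
    proof -
      have "\<bar>round (x i / h)\<bar> \<le> m" if "i < N" for i
      proof -
        have a: "\<bar>of_int (round (x i / h)) - x i / h\<bar> \<le> 1/2" by (rule of_int_round_abs_le)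
        have e: "\<bar>x i / h\<bar> = \<bar>x i\<bar> / h" using h by (simp add: abs_divide)
        have "\<bar>x i / h\<bar> \<le> sqrt (real N) / h"
          unfolding e using divide_right_mono[OF coord_bound[OF x that], of h] h by linarith
        also have "\<dots> \<le> of_int \<lceil>sqrt (real N) / h\<rceil>" by (rule le_of_int_ceiling)
        finally have "\<bar>of_int (round (x i / h))\<bar> \<le> of_int \<lceil>sqrt (real N) / h\<rceil> + (1::real)"
          using a by linarith
        then have "real_of_int \<bar>round (x i / h)\<bar> \<le> real_of_int (\<lceil>sqrt (real N) / h\<rceil> + 1)" by simp
        then have "\<bar>round (x i / h)\<bar> \<le> \<lceil>sqrt (real N) / h\<rceil> + 1" by (simp only: of_int_le_iff)
        then show ?thesis by (simp add: m_def)
      qed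
      then show ?thesis unfolding k_def by (force simp: abs_le_iff)
    qed
    moreover have "y = (\<lambda>i. if i<N then h * of_int (k i) else 0)"
      by (auto simp: y rnd_def k_def)
    ultimately show "y \<in> G" unfolding G_def by blast
  qed
  have eq: "(\<lambda>x. proj N (rnd N h x)) ` sphereN N = proj N ` (rnd N h ` sphereN N)" by auto
  show "finite ((\<lambda>x. proj N (rnd N h x)) ` sphereN N)"
    unfolding eq by (intro finite_imageI finite_subset[OF sub fG])
  have "card ((\<lambda>x. proj N (rnd N h x)) ` sphereN N) \<le> card (rnd N h ` sphereN N)"
    unfolding eq by (rule card_image_le) (rule finite_subset[OF sub fG])
  also have "\<dots> \<le> card G" by (rule card_mono[OF fG sub])
  finally show "card ((\<lambda>x. proj N (rnd N h x)) ` sphereN N) \<le> (nat (2*m+1))^N" using cG by linarith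
qed



lemma op_meas_eq:
  assumes "prob_space M" "A \<in> sets M"
  shows "outer_prob M A = measure M A"
proof (rule antisym)
  show "outer_prob M A \<le> measure M A" by (rule op_le_measure) (use assms in auto)
  show "measure M A \<le> outer_prob M A"
    unfolding outer_prob_def
  proof (rule cInf_greatest)
    show "{measure M B |B. B \<in> sets M \<and> A \<inter> space M \<subseteq> B} \<noteq> {}"
      by (auto intro!: exI[where x="space M"])
  next
    fix m assume "m \<in> {measure M B |B. B \<in> sets M \<and> A \<inter> space M \<subseteq> B}"
    then obtain B where B: "B \<in> sets M" "A \<inter> space M \<subseteq> B" "m = measure M B" by auto
    have "A \<subseteq> B" using B assms sets.sets_into_space by blast
    then show "measure M A \<le> m" using B assms
      by (simp add: prob_space.finite_measure finite_measure.finite_measure_mono)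
  qed
qed

lemma net_exists:
  assumes N: "N \<ge> 1" and a: "\<alpha> > 0"
  shows "\<exists>P. finite P \<and> P \<subseteq> sphereN N \<and>
     (\<forall>x\<in>sphereN N. \<exists>p\<in>P. overlap N x p \<ge> 1 - real N powr (-\<alpha>)) \<and>
     real (card P) \<le> exp (real N * (ln 7 + (1+\<alpha>)/2 * ln (real N)))"
proof -
  define h where "h = real N powr (-\<alpha>/2)"
  have h0: "h > 0" using N by (simp add: h_def)
  have h1: "h \<le> 1"
  proof -
    have "real N powr (\<alpha>/2) \<ge> 1" using N a by (simp add: ge_one_powr_ge_zero)
    then show ?thesis unfolding h_def by (simp add: powr_minus_divide divide_le_eq)
  qed
  have hh: "h^2 = real N powr (-\<alpha>)"
    unfolding h_def using N by (simp add: powr_powr[symmetric] powr_realpow[symmetric] power2_eq_square powr_add[symmetric])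
  define P where "P = (\<lambda>x. proj N (rnd N h x)) ` sphereN N"
  define m where "m = \<lceil>sqrt (real N) / h\<rceil> + 1"
  have fin: "finite P" and cd: "card P \<le> (nat (2*m+1))^N"
    using net_card[OF h0, of N] unfolding P_def m_def by auto
  have sub: "P \<subseteq> sphereN N" unfolding P_def using net_point(1)[OF N h0 h1] by auto
  have cov: "\<forall>x\<in>sphereN N. \<exists>p\<in>P. overlap N x p \<ge> 1 - real N powr (-\<alpha>)"
    unfolding P_def using net_point(2)[OF N h0 h1] hh by auto
  have r: "sqrt (real N) / h = real N powr ((1+\<alpha>)/2)"
  proof -
    have e: "(1+\<alpha>)/2 = 1/2 - (-\<alpha>/2)" by simp
    show ?thesis unfolding h_def e powr_diff using powr_half_sqrt[of "real N"] by simp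
  qed
  have r1: "real N powr ((1+\<alpha>)/2) \<ge> 1" using N a by (simp add: ge_one_powr_ge_zero)
  have "real_of_int m \<le> sqrt (real N) / h + 2" unfolding m_def by linarith
  then have "real (nat (2*m+1)) \<le> 7 * real N powr ((1+\<alpha>)/2)"
    using r r1 by (simp add: m_def)
  have "real (card P) \<le> real ((nat (2*m+1))^N)" using cd by linarith
  also have "\<dots> \<le> (7 * real N powr ((1+\<alpha>)/2))^N"
    unfolding of_nat_power by (rule power_mono) (fact, simp)
  also have "\<dots> = exp (real N * (ln 7 + (1+\<alpha>)/2 * ln (real N)))"
  proof -
    have pos: "7 * real N powr ((1+\<alpha>)/2) > 0" using N by simp
    have "(7 * real N powr ((1+\<alpha>)/2))^N = exp (real N * ln (7 * real N powr ((1+\<alpha>)/2)))"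
      using pos by (simp add: exp_of_nat_mult)
    also have "ln (7 * real N powr ((1+\<alpha>)/2)) = ln 7 + (1+\<alpha>)/2 * ln (real N)"
      using N by (simp add: ln_mult ln_powr)
    finally show ?thesis .
  qed
  finally show ?thesis using fin sub cov by blast
qed



lemma ev_sets:
  assumes "isotropic_field M N F" "p \<in> sphereN N"
  shows "{\<omega>\<in>space M. s \<le> \<bar>F \<omega> p - E\<bar>} \<in> sets M"
proof -
  have [measurable]: "(\<lambda>\<omega>. F \<omega> p) \<in> borel_measurable M"
    using assms by (auto simp: isotropic_field_def)
  show ?thesis by measurable
qed

lemma ev_iso:
  assumes "isotropic_field M N F" "N \<ge> 1" "p \<in> sphereN N"
  shows "measure M {\<omega>\<in>space M. s \<le> \<bar>F \<omega> p - E\<bar>} = measure M {\<omega>\<in>space M. s \<le> \<bar>F \<omega> (northpole N) - E\<bar>}"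
proof -
  have "Collect (\<lambda>y::real. s \<le> \<bar>y - E\<bar>) \<in> sets borel" by measurable
  from iso_event[OF assms this] show ?thesis by simp
qed

lemma sum_ev:
  assumes iso: "isotropic_field M N F" and N: "N \<ge> 1" and P: "finite P" "P \<subseteq> sphereN N"
  shows "measure M (\<Union>p\<in>P. {\<omega>\<in>space M. s \<le> \<bar>F \<omega> p - E\<bar>})
      \<le> real (card P) * measure M {\<omega>\<in>space M. s \<le> \<bar>F \<omega> (northpole N) - E\<bar>}"
proof -
  have "measure M (\<Union>p\<in>P. {\<omega>\<in>space M. s \<le> \<bar>F \<omega> p - E\<bar>})
       \<le> (\<Sum>p\<in>P. measure M {\<omega>\<in>space M. s \<le> \<bar>F \<omega> p - E\<bar>})"
    using P ev_sets[OF iso] by (intro measure_UNION_le) auto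
  also have "\<dots> = (\<Sum>p\<in>P. measure M {\<omega>\<in>space M. s \<le> \<bar>F \<omega> (northpole N) - E\<bar>})"
    using P ev_iso[OF iso N] by (intro sum.cong) auto
  finally show ?thesis by simp
qed

lemma cover1:
  fixes M :: "'w measure" and F :: "'w \<Rightarrow> (nat\<Rightarrow>real) \<Rightarrow> real"
  assumes iso: "isotropic_field M N F" and N: "N \<ge> 1" and t: "t > 0"
    and P: "finite P" "P \<subseteq> sphereN N" "\<forall>x\<in>sphereN N. \<exists>p\<in>P. overlap N x p \<ge> 1 - real N powr (-\<alpha>)"
  shows "outer_prob M {\<omega>\<in>space M. (SUP x\<in>sphereN N. ereal \<bar>F \<omega> x - E\<bar>) \<ge> ereal t}
     \<le> real (card P) * measure M {\<omega>\<in>space M. t/2 \<le> \<bar>F \<omega> (northpole N) - E\<bar>}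
       + outer_prob M {\<omega>\<in>space M. (SUP (x,y)\<in>{(x,y). x \<in> sphereN N \<and> y \<in> sphereN N \<and>
                             overlap N x y \<ge> 1 - real N powr (-\<alpha>)}.
               ereal \<bar>F \<omega> x - F \<omega> y\<bar>) \<ge> ereal (t/4)}"
    (is "outer_prob M ?A \<le> _ + outer_prob M ?O")
proof -
  define G where "G = (\<Union>p\<in>P. {\<omega>\<in>space M. t/2 \<le> \<bar>F \<omega> p - E\<bar>})"
  have G: "G \<in> sets M" unfolding G_def by (intro sets.finite_UN ev_sets[OF iso]) (use P in auto)
  have inc: "?A \<inter> space M \<subseteq> G \<union> ?O"
  proof
    fix \<omega> assume w: "\<omega> \<in> ?A \<inter> space M"
    then have "ereal (3*t/4) < (SUP x\<in>sphereN N. ereal \<bar>F \<omega> x - E\<bar>)"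
      using t by (auto intro: less_le_trans[of _ "ereal t"])
    then obtain x where x: "x \<in> sphereN N" "3*t/4 < \<bar>F \<omega> x - E\<bar>" by (auto simp: less_SUP_iff)
    obtain p where p: "p \<in> P" "overlap N x p \<ge> 1 - real N powr (-\<alpha>)" using P(3) x(1) by blast
    show "\<omega> \<in> G \<union> ?O"
    proof (cases "t/2 \<le> \<bar>F \<omega> p - E\<bar>")
      case True then show ?thesis using w p unfolding G_def by auto
    next
      case False
      then have "t/4 \<le> \<bar>F \<omega> x - F \<omega> p\<bar>" using x by linarith
      moreover have "ereal \<bar>F \<omega> x - F \<omega> p\<bar> \<le> (SUP (x,y)\<in>{(x,y). x \<in> sphereN N \<and> y \<in> sphereN N \<and>
                             overlap N x y \<ge> 1 - real N powr (-\<alpha>)}. ereal \<bar>F \<omega> x - F \<omega> y\<bar>)"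
        by (rule SUP_upper2[of "(x,p)"]) (use x p P(2) in auto)
      ultimately show ?thesis using w by (auto intro: order.trans[rotated])
    qed
  qed
  have "outer_prob M ?A \<le> measure M G + outer_prob M ?O" by (rule op_union[OF G inc])
  also have "measure M G \<le> real (card P) * measure M {\<omega>\<in>space M. t/2 \<le> \<bar>F \<omega> (northpole N) - E\<bar>}"
    unfolding G_def by (rule sum_ev[OF iso N P(1,2)])
  finally show ?thesis by simp
qed

lemma cover2:
  fixes M :: "'w measure" and F :: "'w \<Rightarrow> (nat\<Rightarrow>real) \<Rightarrow> real"
  assumes iso: "isotropic_field M N F" and N: "N \<ge> 1" and t: "t > 0" and E: "E \<le> t/4"
    and nn: "AE \<omega> in M. \<forall>x\<in>sphereN N. F \<omega> x \<ge> 0"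
    and P: "finite P" "P \<subseteq> sphereN N" "\<forall>x\<in>sphereN N. \<exists>p\<in>P. overlap N x p \<ge> 1 - real N powr (-\<alpha>)"
  shows "outer_prob M {\<omega>\<in>space M. (SUP x\<in>sphereN N. ereal (F \<omega> x)) \<ge> ereal t}
     \<le> real (card P) * measure M {\<omega>\<in>space M. t/4 \<le> \<bar>F \<omega> (northpole N) - E\<bar>}
       + outer_prob M {\<omega>\<in>space M. (SUP (x,y)\<in>{(x,y). x \<in> sphereN N \<and> y \<in> sphereN N \<and>
                             overlap N x y \<ge> 1 - real N powr (-\<alpha>)}.
               ereal \<bar>(F \<omega> x)^2 - (F \<omega> y)^2\<bar>) \<ge> ereal (t^2/4)}"
    (is "outer_prob M ?A \<le> _ + outer_prob M ?O")
proof -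
  obtain Z where Z: "{\<omega>\<in>space M. \<not> (\<forall>x\<in>sphereN N. F \<omega> x \<ge> 0)} \<subseteq> Z" "emeasure M Z = 0" "Z \<in> sets M"
    using nn by (auto elim!: AE_E)
  define G0 where "G0 = (\<Union>p\<in>P. {\<omega>\<in>space M. t/4 \<le> \<bar>F \<omega> p - E\<bar>})"
  have G0: "G0 \<in> sets M" unfolding G0_def by (intro sets.finite_UN ev_sets[OF iso]) (use P in auto)
  have inc: "?A \<inter> space M \<subseteq> (Z \<union> G0) \<union> ?O"
  proof
    fix \<omega> assume w: "\<omega> \<in> ?A \<inter> space M"
    show "\<omega> \<in> (Z \<union> G0) \<union> ?O"
    proof (cases "\<omega> \<in> Z")
      case True then show ?thesis by auto
    next
      case False
      then have pos: "\<And>x. x \<in> sphereN N \<Longrightarrow> F \<omega> x \<ge> 0" using Z(1) w by auto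
      have "ereal (3*t/4) < (SUP x\<in>sphereN N. ereal (F \<omega> x))"
        using t w by (auto intro: less_le_trans[of _ "ereal t"])
      then obtain x where x: "x \<in> sphereN N" "3*t/4 < F \<omega> x" by (auto simp: less_SUP_iff)
      obtain p where p: "p \<in> P" "overlap N x p \<ge> 1 - real N powr (-\<alpha>)" using P(3) x(1) by blast
      have p0: "F \<omega> p \<ge> 0" using pos p P(2) by auto
      show ?thesis
      proof (cases "t/2 \<le> F \<omega> p")
        case True
        then have "t/4 \<le> \<bar>F \<omega> p - E\<bar>" using E by linarith
        then show ?thesis using w p unfolding G0_def by auto
      next
        case False
        have a: "(3*t/4)^2 \<le> (F \<omega> x)^2" using x t by (intro power_mono) auto
        have b: "(F \<omega> p)^2 \<le> (t/2)^2" using False p0 by (intro power_mono) auto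
        have "(3*t/4)^2 - (t/2)^2 \<ge> t^2/4" by (simp add: power2_eq_square field_simps)
        then have "t^2/4 \<le> \<bar>(F \<omega> x)^2 - (F \<omega> p)^2\<bar>" using a b by linarith
        moreover have "ereal \<bar>(F \<omega> x)^2 - (F \<omega> p)^2\<bar> \<le> (SUP (x,y)\<in>{(x,y). x \<in> sphereN N \<and> y \<in> sphereN N \<and>
                             overlap N x y \<ge> 1 - real N powr (-\<alpha>)}. ereal \<bar>(F \<omega> x)^2 - (F \<omega> y)^2\<bar>)"
          by (rule SUP_upper2[of "(x,p)"]) (use x p P(2) in auto)
        ultimately show ?thesis using w by (auto intro: order.trans[rotated])
      qed
    qed
  qed
  have "outer_prob M ?A \<le> measure M (Z \<union> G0) + outer_prob M ?O" by (rule op_union[OF _ inc]) (use G0 Z in auto)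
  also have "measure M (Z \<union> G0) \<le> measure M Z + measure M G0" using Z G0 by (intro measure_Un_le) auto
  also have "measure M Z = 0" using Z by (simp add: measure_def)
  also have "measure M G0 \<le> real (card P) * measure M {\<omega>\<in>space M. t/4 \<le> \<bar>F \<omega> (northpole N) - E\<bar>}"
    unfolding G0_def by (rule sum_ev[OF iso N P(1,2)])
  finally show ?thesis by simp
qed



theorem mainTheorem12:
  fixes M :: "nat \<Rightarrow> 'w measure"
    and F :: "nat \<Rightarrow> 'w \<Rightarrow> (nat \<Rightarrow> real) \<Rightarrow> real"
  assumes prob: "\<And>N. N \<ge> 1 \<Longrightarrow> prob_space (M N)"
    and iso: "\<And>N. N \<ge> 1 \<Longrightarrow> isotropic_field (M N) N (F N)"
    and cont: "\<And>N. N \<ge> 1 \<Longrightarrow> AE \<omega> in M N. continuous_on (sphereN N) (F N \<omega>)"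
    and integ: "\<And>N. N \<ge> 1 \<Longrightarrow> integrable (M N) (\<lambda>\<omega>. F N \<omega> (northpole N))"
  shows
   "((\<forall>c>0. \<exists>c1>0. \<forall>\<delta>>0. \<exists>K. \<forall>N\<ge>1.
        outer_prob (M N) {\<omega>\<in>space (M N).
           \<bar>F N \<omega> (northpole N) - (\<integral>\<omega>'. F N \<omega>' (northpole N) \<partial>M N)\<bar>
             \<ge> c * real N powr (1/2 + \<delta>)}
        \<le> K * exp (- c1 * real N powr (1 + 2*\<delta>)))
     \<and> (\<exists>\<alpha>>0. \<forall>c>0. \<exists>c2>0. \<forall>\<delta>>0. \<exists>K. \<forall>N\<ge>1.
        outer_prob (M N) {\<omega>\<in>space (M N).
           (SUP (x,y)\<in>{(x,y). x \<in> sphereN N \<and> y \<in> sphereN N \<and>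
                             overlap N x y \<ge> 1 - real N powr (-\<alpha>)}.
               ereal \<bar>F N \<omega> x - F N \<omega> y\<bar>)
             \<ge> ereal (c * real N powr (1/2 + \<delta>))}
        \<le> K * exp (- c2 * real N powr (1 + 2*\<delta>)))
     \<longrightarrow> (\<forall>c>0. \<exists>f>0. \<forall>\<delta>>0. \<exists>K. \<forall>N\<ge>1.
        outer_prob (M N) {\<omega>\<in>space (M N).
           (SUP x\<in>sphereN N.
               ereal \<bar>F N \<omega> x - (\<integral>\<omega>'. F N \<omega>' (northpole N) \<partial>M N)\<bar>)
             \<ge> ereal (c * real N powr (1/2 + \<delta>))}
        \<le> K * exp (- f * real N powr (1 + 2*\<delta>))))
  \<and>
   ((\<forall>N\<ge>1. AE \<omega> in M N. \<forall>x\<in>sphereN N. F N \<omega> x \<ge> 0)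
     \<and> (\<exists>C. \<forall>N\<ge>1. \<bar>\<integral>\<omega>. F N \<omega> (northpole N) \<partial>M N\<bar> \<le> C * sqrt (real N))
     \<and> (\<forall>c>0. \<exists>c1>0. \<forall>\<delta>>0. \<exists>K. \<forall>N\<ge>1.
        outer_prob (M N) {\<omega>\<in>space (M N).
           \<bar>F N \<omega> (northpole N) - (\<integral>\<omega>'. F N \<omega>' (northpole N) \<partial>M N)\<bar>
             \<ge> c * real N powr (1/2 + \<delta>)}
        \<le> K * exp (- c1 * real N powr (1 + 2*\<delta>)))
     \<and> (\<exists>\<alpha>>0. \<forall>c>0. \<exists>c2>0. \<forall>\<delta>>0. \<exists>K. \<forall>N\<ge>1.
        outer_prob (M N) {\<omega>\<in>space (M N).
           (SUP (x,y)\<in>{(x,y). x \<in> sphereN N \<and> y \<in> sphereN N \<and>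
                             overlap N x y \<ge> 1 - real N powr (-\<alpha>)}.
               ereal \<bar>(F N \<omega> x)^2 - (F N \<omega> y)^2\<bar>)
             \<ge> ereal (c * real N powr (1 + 2*\<delta>))}
        \<le> K * exp (- c2 * real N powr (1 + 2*\<delta>)))
     \<longrightarrow> (\<forall>c>0. \<exists>f>0. \<forall>\<delta>>0. \<exists>K. \<forall>N\<ge>1.
        outer_prob (M N) {\<omega>\<in>space (M N).
           (SUP x\<in>sphereN N. ereal (F N \<omega> x)) \<ge> ereal (c * real N powr (1/2 + \<delta>))}
        \<le> K * exp (- f * real N powr (1 + 2*\<delta>))))"
proof -
  define S where "S = sphereN"
  define E where "E = (\<lambda>N. \<integral>\<omega>'. F N \<omega>' (northpole N) \<partial>M N)"
  have netex: "\<And>\<alpha>. \<alpha> > 0 \<Longrightarrow> \<exists>Pn. \<forall>N\<ge>1. finite (Pn N) \<and> Pn N \<subseteq> sphereN N \<and>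
     (\<forall>x\<in>sphereN N. \<exists>p\<in>Pn N. overlap N x p \<ge> 1 - real N powr (-\<alpha>)) \<and>
     real (card (Pn N)) \<le> exp (real N * (ln 7 + (1+\<alpha>)/2 * ln (real N)))"
  proof -
    fix \<alpha> :: real assume a: "\<alpha> > 0"
    have "\<forall>N. \<exists>P. N \<ge> 1 \<longrightarrow> finite P \<and> P \<subseteq> sphereN N \<and>
     (\<forall>x\<in>sphereN N. \<exists>p\<in>P. overlap N x p \<ge> 1 - real N powr (-\<alpha>)) \<and>
     real (card P) \<le> exp (real N * (ln 7 + (1+\<alpha>)/2 * ln (real N)))"
    proof
      fix N :: nat
      show "\<exists>P. N \<ge> 1 \<longrightarrow> finite P \<and> P \<subseteq> sphereN N \<and>
     (\<forall>x\<in>sphereN N. \<exists>p\<in>P. overlap N x p \<ge> 1 - real N powr (-\<alpha>)) \<and>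
     real (card P) \<le> exp (real N * (ln 7 + (1+\<alpha>)/2 * ln (real N)))"
      proof (cases "N \<ge> 1")
        case True
        then obtain P where "finite P \<and> P \<subseteq> sphereN N \<and>
     (\<forall>x\<in>sphereN N. \<exists>p\<in>P. overlap N x p \<ge> 1 - real N powr (-\<alpha>)) \<and>
     real (card P) \<le> exp (real N * (ln 7 + (1+\<alpha>)/2 * ln (real N)))"
          using net_exists[OF _ a] by presburger
        then show ?thesis by (intro exI[of _ P]) (rule impI)
      qed simp
    qed
    then show "?thesis \<alpha>" by (rule choice)
  qed
  have pw: "\<And>N::nat. \<And>\<delta>. N \<ge> 1 \<Longrightarrow> (real N powr (1/2+\<delta>))^2 = real N powr (1+2*\<delta>)"
  proof -
    fix N :: nat and \<delta> :: real
    have "(real N powr (1/2+\<delta>))^2 = real N powr ((1/2+\<delta>) + (1/2+\<delta>))"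
      by (simp only: power2_eq_square powr_add[symmetric])
    moreover have "(1/2+\<delta>) + (1/2+\<delta>) = 1+2*\<delta>" by simp
    ultimately show "(real N powr (1/2+\<delta>))^2 = real N powr (1+2*\<delta>)" by (simp only:)
  qed
  have Kpos: "\<And>K c1 N X. N \<ge> 1 \<Longrightarrow> outer_prob (M N) X \<le> K * exp (- c1 * real N powr (1 + 2*\<delta>)) \<Longrightarrow> K \<ge> 0" for \<delta>
  proof -
    fix K c1 X and N :: nat
    assume "N \<ge> 1" "outer_prob (M N) X \<le> K * exp (- c1 * real N powr (1 + 2*\<delta>))"
    then have "0 \<le> K * exp (- c1 * real N powr (1 + 2*\<delta>))" using op_nonneg[of "M N" X] by linarith
    then show "K \<ge> 0" by (simp add: zero_le_mult_iff)
  qed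
  have part1: "((\<forall>c>0. \<exists>c1>0. \<forall>\<delta>>0. \<exists>K. \<forall>N\<ge>1.
        outer_prob (M N) {\<omega>\<in>space (M N).
           \<bar>F N \<omega> (northpole N) - (\<integral>\<omega>'. F N \<omega>' (northpole N) \<partial>M N)\<bar>
             \<ge> c * real N powr (1/2 + \<delta>)}
        \<le> K * exp (- c1 * real N powr (1 + 2*\<delta>)))
     \<and> (\<exists>\<alpha>>0. \<forall>c>0. \<exists>c2>0. \<forall>\<delta>>0. \<exists>K. \<forall>N\<ge>1.
        outer_prob (M N) {\<omega>\<in>space (M N).
           (SUP (x,y)\<in>{(x,y). x \<in> sphereN N \<and> y \<in> sphereN N \<and>
                             overlap N x y \<ge> 1 - real N powr (-\<alpha>)}.
               ereal \<bar>F N \<omega> x - F N \<omega> y\<bar>)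
             \<ge> ereal (c * real N powr (1/2 + \<delta>))}
        \<le> K * exp (- c2 * real N powr (1 + 2*\<delta>)))
     \<longrightarrow> (\<forall>c>0. \<exists>f>0. \<forall>\<delta>>0. \<exists>K. \<forall>N\<ge>1.
        outer_prob (M N) {\<omega>\<in>space (M N).
           (SUP x\<in>sphereN N.
               ereal \<bar>F N \<omega> x - (\<integral>\<omega>'. F N \<omega>' (northpole N) \<partial>M N)\<bar>)
             \<ge> ereal (c * real N powr (1/2 + \<delta>))}
        \<le> K * exp (- f * real N powr (1 + 2*\<delta>))))"
  proof (rule impI, rule allI)
    fix c :: real
    assume H: "(\<forall>c>0. \<exists>c1>0. \<forall>\<delta>>0. \<exists>K. \<forall>N\<ge>1.
        outer_prob (M N) {\<omega>\<in>space (M N).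
           \<bar>F N \<omega> (northpole N) - (\<integral>\<omega>'. F N \<omega>' (northpole N) \<partial>M N)\<bar>
             \<ge> c * real N powr (1/2 + \<delta>)}
        \<le> K * exp (- c1 * real N powr (1 + 2*\<delta>)))
     \<and> (\<exists>\<alpha>>0. \<forall>c>0. \<exists>c2>0. \<forall>\<delta>>0. \<exists>K. \<forall>N\<ge>1.
        outer_prob (M N) {\<omega>\<in>space (M N).
           (SUP (x,y)\<in>{(x,y). x \<in> sphereN N \<and> y \<in> sphereN N \<and>
                             overlap N x y \<ge> 1 - real N powr (-\<alpha>)}.
               ereal \<bar>F N \<omega> x - F N \<omega> y\<bar>)
             \<ge> ereal (c * real N powr (1/2 + \<delta>))}
        \<le> K * exp (- c2 * real N powr (1 + 2*\<delta>)))"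
    then obtain \<alpha> where a: "\<alpha> > 0" and H2: "\<forall>c>0. \<exists>c2>0. \<forall>\<delta>>0. \<exists>K. \<forall>N\<ge>1.
        outer_prob (M N) {\<omega>\<in>space (M N).
           (SUP (x,y)\<in>{(x,y). x \<in> sphereN N \<and> y \<in> sphereN N \<and>
                             overlap N x y \<ge> 1 - real N powr (-\<alpha>)}.
               ereal \<bar>F N \<omega> x - F N \<omega> y\<bar>)
             \<ge> ereal (c * real N powr (1/2 + \<delta>))}
        \<le> K * exp (- c2 * real N powr (1 + 2*\<delta>))" by (elim conjE exE) (rule that)
    from H have H1: "\<forall>c>0. \<exists>c1>0. \<forall>\<delta>>0. \<exists>K. \<forall>N\<ge>1.
        outer_prob (M N) {\<omega>\<in>space (M N).
           \<bar>F N \<omega> (northpole N) - (\<integral>\<omega>'. F N \<omega>' (northpole N) \<partial>M N)\<bar>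
             \<ge> c * real N powr (1/2 + \<delta>)}
        \<le> K * exp (- c1 * real N powr (1 + 2*\<delta>))" by (rule conjunct1)
    obtain Pn where Pn: "\<forall>N\<ge>1. finite (Pn N) \<and> Pn N \<subseteq> sphereN N \<and>
     (\<forall>x\<in>sphereN N. \<exists>p\<in>Pn N. overlap N x p \<ge> 1 - real N powr (-\<alpha>)) \<and>
     real (card (Pn N)) \<le> exp (real N * (ln 7 + (1+\<alpha>)/2 * ln (real N)))"
      using netex[OF a] by (elim exE) (rule that)
    show "c > 0 \<longrightarrow> (\<exists>f>0. \<forall>\<delta>>0. \<exists>K. \<forall>N\<ge>1.
        outer_prob (M N) {\<omega>\<in>space (M N).
           (SUP x\<in>sphereN N.
               ereal \<bar>F N \<omega> x - (\<integral>\<omega>'. F N \<omega>' (northpole N) \<partial>M N)\<bar>)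
             \<ge> ereal (c * real N powr (1/2 + \<delta>))}
        \<le> K * exp (- f * real N powr (1 + 2*\<delta>)))"
    proof
      assume c: "c > 0"
      have c4: "c/4 > 0" using c by simp
      obtain c1 where c1: "c1 > 0" and C1: "\<forall>\<delta>>0. \<exists>K. \<forall>N\<ge>1.
        outer_prob (M N) {\<omega>\<in>space (M N).
           \<bar>F N \<omega> (northpole N) - (\<integral>\<omega>'. F N \<omega>' (northpole N) \<partial>M N)\<bar>
             \<ge> (c/2) * real N powr (1/2 + \<delta>)}
        \<le> K * exp (- c1 * real N powr (1 + 2*\<delta>))" using H1[rule_format, OF half_gt_zero[OF c]] by (elim exE conjE) (rule that)
      obtain c2 where c2: "c2 > 0" and C2: "\<forall>\<delta>>0. \<exists>K. \<forall>N\<ge>1.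
        outer_prob (M N) {\<omega>\<in>space (M N).
           (SUP (x,y)\<in>{(x,y). x \<in> sphereN N \<and> y \<in> sphereN N \<and>
                             overlap N x y \<ge> 1 - real N powr (-\<alpha>)}.
               ereal \<bar>F N \<omega> x - F N \<omega> y\<bar>)
             \<ge> ereal ((c/4) * real N powr (1/2 + \<delta>))}
        \<le> K * exp (- c2 * real N powr (1 + 2*\<delta>))" using H2[rule_format, OF c4] by (elim exE conjE) (rule that)
      define f where "f = min (c1/2) c2"
      have f: "f > 0" using c1 c2 by (simp add: f_def)
      have fle: "f \<le> c1/2" "f \<le> c2" by (simp_all add: f_def)
      show "\<exists>f>0. \<forall>\<delta>>0. \<exists>K. \<forall>N\<ge>1.
        outer_prob (M N) {\<omega>\<in>space (M N).
           (SUP x\<in>sphereN N.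
               ereal \<bar>F N \<omega> x - (\<integral>\<omega>'. F N \<omega>' (northpole N) \<partial>M N)\<bar>)
             \<ge> ereal (c * real N powr (1/2 + \<delta>))}
        \<le> K * exp (- f * real N powr (1 + 2*\<delta>))"
      proof (rule exI[of _ f], intro conjI allI impI f)
        fix \<delta> :: real assume d: "\<delta> > 0"
        obtain K1 where K1: "\<forall>N\<ge>1.
          outer_prob (M N) {\<omega>\<in>space (M N).
           \<bar>F N \<omega> (northpole N) - (\<integral>\<omega>'. F N \<omega>' (northpole N) \<partial>M N)\<bar>
             \<ge> (c/2) * real N powr (1/2 + \<delta>)}
          \<le> K1 * exp (- c1 * real N powr (1 + 2*\<delta>))" using C1[rule_format, OF d] by (elim exE) (rule that)
        obtain K2 where K2: "\<forall>N\<ge>1.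
          outer_prob (M N) {\<omega>\<in>space (M N).
           (SUP (x,y)\<in>{(x,y). x \<in> sphereN N \<and> y \<in> sphereN N \<and>
                             overlap N x y \<ge> 1 - real N powr (-\<alpha>)}.
               ereal \<bar>F N \<omega> x - F N \<omega> y\<bar>)
             \<ge> ereal ((c/4) * real N powr (1/2 + \<delta>))}
          \<le> K2 * exp (- c2 * real N powr (1 + 2*\<delta>))" using C2[rule_format, OF d] by (elim exE) (rule that)
        have K1p: "K1 \<ge> 0" by (rule Kpos[OF le_refl K1[rule_format, OF le_refl]])
        have K2p: "K2 \<ge> 0" by (rule Kpos[OF le_refl K2[rule_format, OF le_refl]])
        obtain G where G: "\<forall>N::nat\<ge>1. real N*(ln 7 + (1+\<alpha>)/2*ln (real N)) - (c1/2) * real N powr (1+2*\<delta>) \<le> G"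
          using growth[OF half_gt_zero[OF c1] d, of "ln 7" "(1+\<alpha>)/2"] by (elim exE) (rule that)
        show "\<exists>K. \<forall>N\<ge>1.
        outer_prob (M N) {\<omega>\<in>space (M N).
           (SUP x\<in>sphereN N.
               ereal \<bar>F N \<omega> x - (\<integral>\<omega>'. F N \<omega>' (northpole N) \<partial>M N)\<bar>)
             \<ge> ereal (c * real N powr (1/2 + \<delta>))}
        \<le> K * exp (- f * real N powr (1 + 2*\<delta>))"
        proof (intro exI[of _ "K1 * exp G + K2"] allI impI)
          fix N :: nat assume N: "N \<ge> 1"
          define T where "T = real N powr (1 + 2*\<delta>)"
          define t where "t = c * real N powr (1/2 + \<delta>)"
          have t: "t > 0" using c N by (simp add: t_def)
          have t2: "t/2 = (c/2) * real N powr (1/2 + \<delta>)" "t/4 = (c/4) * real N powr (1/2 + \<delta>)"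
            by (simp_all add: t_def)
          have PN: "finite (Pn N)" "Pn N \<subseteq> sphereN N"
             "\<forall>x\<in>sphereN N. \<exists>p\<in>Pn N. overlap N x p \<ge> 1 - real N powr (-\<alpha>)"
             "real (card (Pn N)) \<le> exp (real N * (ln 7 + (1+\<alpha>)/2 * ln (real N)))" using Pn[rule_format, OF N] by simp_all
          have ev: "{\<omega>\<in>space (M N). t/2 \<le> \<bar>F N \<omega> (northpole N) - E N\<bar>} \<in> sets (M N)"
            by (rule ev_sets[OF iso[OF N] northpole_sphere[OF N]])
          have "outer_prob (M N) {\<omega>\<in>space (M N).
           (SUP x\<in>sphereN N. ereal \<bar>F N \<omega> x - E N\<bar>) \<ge> ereal t}
            \<le> real (card (Pn N)) * measure (M N) {\<omega>\<in>space (M N). t/2 \<le> \<bar>F N \<omega> (northpole N) - E N\<bar>}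
             + outer_prob (M N) {\<omega>\<in>space (M N). (SUP (x,y)\<in>{(x,y). x \<in> sphereN N \<and> y \<in> sphereN N \<and>
                             overlap N x y \<ge> 1 - real N powr (-\<alpha>)}.
               ereal \<bar>F N \<omega> x - F N \<omega> y\<bar>) \<ge> ereal (t/4)}"
            by (rule cover1[OF iso[OF N] N t PN(1-3)])
          also have "measure (M N) {\<omega>\<in>space (M N). t/2 \<le> \<bar>F N \<omega> (northpole N) - E N\<bar>}
              = outer_prob (M N) {\<omega>\<in>space (M N). t/2 \<le> \<bar>F N \<omega> (northpole N) - E N\<bar>}"
            by (rule op_meas_eq[OF prob[OF N] ev, symmetric])
          also have "\<dots> \<le> K1 * exp (- c1 * T)" unfolding t2 T_def E_def by (rule K1[rule_format, OF N])
          also have "outer_prob (M N) {\<omega>\<in>space (M N). (SUP (x,y)\<in>{(x,y). x \<in> sphereN N \<and> y \<in> sphereN N \<and>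
                             overlap N x y \<ge> 1 - real N powr (-\<alpha>)}.
               ereal \<bar>F N \<omega> x - F N \<omega> y\<bar>) \<ge> ereal (t/4)} \<le> K2 * exp (- c2 * T)"
            unfolding t2 T_def by (rule K2[rule_format, OF N])
          finally have main: "outer_prob (M N) {\<omega>\<in>space (M N).
           (SUP x\<in>sphereN N. ereal \<bar>F N \<omega> x - E N\<bar>) \<ge> ereal t}
            \<le> real (card (Pn N)) * (K1 * exp (- c1 * T)) + K2 * exp (- c2 * T)"
            by (simp add: mult_left_mono)
          have T0: "T \<ge> 0" by (simp add: T_def)
          have "real (card (Pn N)) * (K1 * exp (- c1 * T))
              \<le> exp (real N * (ln 7 + (1+\<alpha>)/2 * ln (real N))) * (K1 * exp (- c1 * T))"
            using PN(4) K1p by (intro mult_right_mono) auto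
          also have "\<dots> = K1 * exp (real N * (ln 7 + (1+\<alpha>)/2 * ln (real N)) - (c1/2) * T) * exp (- (c1/2) * T)"
            by (simp add: exp_add[symmetric] algebra_simps)
          also have "\<dots> \<le> K1 * exp G * exp (- f * T)"
          proof -
            have "exp (real N * (ln 7 + (1+\<alpha>)/2 * ln (real N)) - (c1/2) * T) \<le> exp G"
              using G[rule_format, OF N] unfolding T_def by simp
            moreover have "exp (- (c1/2) * T) \<le> exp (- f * T)"
              using mult_right_mono[OF fle(1) T0] by simp
            ultimately show ?thesis using K1p by (intro mult_mono) auto
          qed
          finally have A1: "real (card (Pn N)) * (K1 * exp (- c1 * T)) \<le> K1 * exp G * exp (- f * T)" .
          have A2: "K2 * exp (- c2 * T) \<le> K2 * exp (- f * T)"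
            using K2p mult_right_mono[OF fle(2) T0] by (intro mult_left_mono) auto
          have "outer_prob (M N) {\<omega>\<in>space (M N).
           (SUP x\<in>sphereN N. ereal \<bar>F N \<omega> x - E N\<bar>) \<ge> ereal t} \<le> (K1 * exp G + K2) * exp (- f * T)"
            using main A1 A2 by (simp add: algebra_simps)
          then show "outer_prob (M N) {\<omega>\<in>space (M N).
           (SUP x\<in>sphereN N.
               ereal \<bar>F N \<omega> x - (\<integral>\<omega>'. F N \<omega>' (northpole N) \<partial>M N)\<bar>)
             \<ge> ereal (c * real N powr (1/2 + \<delta>))}
           \<le> (K1 * exp G + K2) * exp (- f * real N powr (1 + 2*\<delta>))"
            unfolding E_def t_def T_def .
        qed
      qed
    qed
  qed
  have part2: "((\<forall>N\<ge>1. AE \<omega> in M N. \<forall>x\<in>sphereN N. F N \<omega> x \<ge> 0)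
     \<and> (\<exists>C. \<forall>N\<ge>1. \<bar>\<integral>\<omega>. F N \<omega> (northpole N) \<partial>M N\<bar> \<le> C * sqrt (real N))
     \<and> (\<forall>c>0. \<exists>c1>0. \<forall>\<delta>>0. \<exists>K. \<forall>N\<ge>1.
        outer_prob (M N) {\<omega>\<in>space (M N).
           \<bar>F N \<omega> (northpole N) - (\<integral>\<omega>'. F N \<omega>' (northpole N) \<partial>M N)\<bar>
             \<ge> c * real N powr (1/2 + \<delta>)}
        \<le> K * exp (- c1 * real N powr (1 + 2*\<delta>)))
     \<and> (\<exists>\<alpha>>0. \<forall>c>0. \<exists>c2>0. \<forall>\<delta>>0. \<exists>K. \<forall>N\<ge>1.
        outer_prob (M N) {\<omega>\<in>space (M N).
           (SUP (x,y)\<in>{(x,y). x \<in> sphereN N \<and> y \<in> sphereN N \<and>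
                             overlap N x y \<ge> 1 - real N powr (-\<alpha>)}.
               ereal \<bar>(F N \<omega> x)^2 - (F N \<omega> y)^2\<bar>)
             \<ge> ereal (c * real N powr (1 + 2*\<delta>))}
        \<le> K * exp (- c2 * real N powr (1 + 2*\<delta>)))
     \<longrightarrow> (\<forall>c>0. \<exists>f>0. \<forall>\<delta>>0. \<exists>K. \<forall>N\<ge>1.
        outer_prob (M N) {\<omega>\<in>space (M N).
           (SUP x\<in>sphereN N. ereal (F N \<omega> x)) \<ge> ereal (c * real N powr (1/2 + \<delta>))}
        \<le> K * exp (- f * real N powr (1 + 2*\<delta>))))"
  proof (rule impI)
    assume H: "(\<forall>N\<ge>1. AE \<omega> in M N. \<forall>x\<in>sphereN N. F N \<omega> x \<ge> 0)
     \<and> (\<exists>C. \<forall>N\<ge>1. \<bar>\<integral>\<omega>. F N \<omega> (northpole N) \<partial>M N\<bar> \<le> C * sqrt (real N))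
     \<and> (\<forall>c>0. \<exists>c1>0. \<forall>\<delta>>0. \<exists>K. \<forall>N\<ge>1.
        outer_prob (M N) {\<omega>\<in>space (M N).
           \<bar>F N \<omega> (northpole N) - (\<integral>\<omega>'. F N \<omega>' (northpole N) \<partial>M N)\<bar>
             \<ge> c * real N powr (1/2 + \<delta>)}
        \<le> K * exp (- c1 * real N powr (1 + 2*\<delta>)))
     \<and> (\<exists>\<alpha>>0. \<forall>c>0. \<exists>c2>0. \<forall>\<delta>>0. \<exists>K. \<forall>N\<ge>1.
        outer_prob (M N) {\<omega>\<in>space (M N).
           (SUP (x,y)\<in>{(x,y). x \<in> sphereN N \<and> y \<in> sphereN N \<and>
                             overlap N x y \<ge> 1 - real N powr (-\<alpha>)}.
               ereal \<bar>(F N \<omega> x)^2 - (F N \<omega> y)^2\<bar>)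
             \<ge> ereal (c * real N powr (1 + 2*\<delta>))}
        \<le> K * exp (- c2 * real N powr (1 + 2*\<delta>)))"
    note NN = H[THEN conjunct1]
    note Cb = H[THEN conjunct2, THEN conjunct1]
    note H1 = H[THEN conjunct2, THEN conjunct2, THEN conjunct1]
    note H2x = H[THEN conjunct2, THEN conjunct2, THEN conjunct2]
    from H2x obtain \<alpha> where a: "\<alpha> > 0" and H2: "\<forall>c>0. \<exists>c2>0. \<forall>\<delta>>0. \<exists>K. \<forall>N\<ge>1.
        outer_prob (M N) {\<omega>\<in>space (M N).
           (SUP (x,y)\<in>{(x,y). x \<in> sphereN N \<and> y \<in> sphereN N \<and>
                             overlap N x y \<ge> 1 - real N powr (-\<alpha>)}.
               ereal \<bar>(F N \<omega> x)^2 - (F N \<omega> y)^2\<bar>)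
             \<ge> ereal (c * real N powr (1 + 2*\<delta>))}
        \<le> K * exp (- c2 * real N powr (1 + 2*\<delta>))" by (elim conjE exE) (rule that)
    from Cb obtain C where C: "\<forall>N\<ge>1. \<bar>\<integral>\<omega>. F N \<omega> (northpole N) \<partial>M N\<bar> \<le> C * sqrt (real N)" by (elim exE) (rule that)
    obtain Pn where Pn: "\<forall>N\<ge>1. finite (Pn N) \<and> Pn N \<subseteq> sphereN N \<and>
     (\<forall>x\<in>sphereN N. \<exists>p\<in>Pn N. overlap N x p \<ge> 1 - real N powr (-\<alpha>)) \<and>
     real (card (Pn N)) \<le> exp (real N * (ln 7 + (1+\<alpha>)/2 * ln (real N)))"
      using netex[OF a] by (elim exE) (rule that)
    show "\<forall>c>0. \<exists>f>0. \<forall>\<delta>>0. \<exists>K. \<forall>N\<ge>1.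
        outer_prob (M N) {\<omega>\<in>space (M N).
           (SUP x\<in>sphereN N. ereal (F N \<omega> x)) \<ge> ereal (c * real N powr (1/2 + \<delta>))}
        \<le> K * exp (- f * real N powr (1 + 2*\<delta>))"
    proof (intro allI impI)
      fix c :: real assume c: "c > 0"
      have c4: "c/4 > 0" using c by simp
      obtain c1 where c1: "c1 > 0" and C1: "\<forall>\<delta>>0. \<exists>K. \<forall>N\<ge>1.
        outer_prob (M N) {\<omega>\<in>space (M N).
           \<bar>F N \<omega> (northpole N) - (\<integral>\<omega>'. F N \<omega>' (northpole N) \<partial>M N)\<bar>
             \<ge> (c/4) * real N powr (1/2 + \<delta>)}
        \<le> K * exp (- c1 * real N powr (1 + 2*\<delta>))" using H1[rule_format, OF c4] by (elim exE conjE) (rule that)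
      have cc: "c^2/4 > 0" using c by simp
      obtain c2 where c2: "c2 > 0" and C2: "\<forall>\<delta>>0. \<exists>K. \<forall>N\<ge>1.
        outer_prob (M N) {\<omega>\<in>space (M N).
           (SUP (x,y)\<in>{(x,y). x \<in> sphereN N \<and> y \<in> sphereN N \<and>
                             overlap N x y \<ge> 1 - real N powr (-\<alpha>)}.
               ereal \<bar>(F N \<omega> x)^2 - (F N \<omega> y)^2\<bar>)
             \<ge> ereal ((c^2/4) * real N powr (1 + 2*\<delta>))}
        \<le> K * exp (- c2 * real N powr (1 + 2*\<delta>))" using H2[rule_format, OF cc] by (elim exE conjE) (rule that)
      define f where "f = min (c1/2) c2"
      have f: "f > 0" using c1 c2 by (simp add: f_def)
      have fle: "f \<le> c1/2" "f \<le> c2" by (simp_all add: f_def)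
      show "\<exists>f>0. \<forall>\<delta>>0. \<exists>K. \<forall>N\<ge>1.
        outer_prob (M N) {\<omega>\<in>space (M N).
           (SUP x\<in>sphereN N. ereal (F N \<omega> x)) \<ge> ereal (c * real N powr (1/2 + \<delta>))}
        \<le> K * exp (- f * real N powr (1 + 2*\<delta>))"
      proof (rule exI[of _ f], intro conjI allI impI f)
        fix \<delta> :: real assume d: "\<delta> > 0"
        obtain K1 where K1: "\<forall>N\<ge>1.
          outer_prob (M N) {\<omega>\<in>space (M N).
           \<bar>F N \<omega> (northpole N) - (\<integral>\<omega>'. F N \<omega>' (northpole N) \<partial>M N)\<bar>
             \<ge> (c/4) * real N powr (1/2 + \<delta>)}
          \<le> K1 * exp (- c1 * real N powr (1 + 2*\<delta>))" using C1[rule_format, OF d] by (elim exE) (rule that)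
        obtain K2 where K2: "\<forall>N\<ge>1.
          outer_prob (M N) {\<omega>\<in>space (M N).
           (SUP (x,y)\<in>{(x,y). x \<in> sphereN N \<and> y \<in> sphereN N \<and>
                             overlap N x y \<ge> 1 - real N powr (-\<alpha>)}.
               ereal \<bar>(F N \<omega> x)^2 - (F N \<omega> y)^2\<bar>)
             \<ge> ereal ((c^2/4) * real N powr (1 + 2*\<delta>))}
          \<le> K2 * exp (- c2 * real N powr (1 + 2*\<delta>))" using C2[rule_format, OF d] by (elim exE) (rule that)
        have K1p: "K1 \<ge> 0" by (rule Kpos[OF le_refl K1[rule_format, OF le_refl]])
        have K2p: "K2 \<ge> 0" by (rule Kpos[OF le_refl K2[rule_format, OF le_refl]])
        obtain G where G: "\<forall>N::nat\<ge>1. real N*(ln 7 + (1+\<alpha>)/2*ln (real N)) - (c1/2) * real N powr (1+2*\<delta>) \<le> G"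
          using growth[OF half_gt_zero[OF c1] d, of "ln 7" "(1+\<alpha>)/2"] by (elim exE) (rule that)
        have "filterlim (\<lambda>x::real. x powr \<delta>) at_top at_top" using d by real_asymp
        then have "eventually (\<lambda>x::real. x powr \<delta> \<ge> 4 * \<bar>C\<bar> / c) at_top"
          by (simp add: filterlim_at_top)
        then obtain X where X: "\<And>x::real. x \<ge> X \<Longrightarrow> x powr \<delta> \<ge> 4 * \<bar>C\<bar> / c"
          by (auto simp: eventually_at_top_linorder)
        define N0 where "N0 = nat \<lceil>X\<rceil> + 1"
        define K' where "K' = K1 * exp G + K2"
        have K'p: "K' \<ge> 0" using K1p K2p by (simp add: K'_def)
        define Ks where "Ks = (\<Sum>N<N0. exp (f * real N powr (1 + 2*\<delta>)))"
        show "\<exists>K. \<forall>N\<ge>1.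
        outer_prob (M N) {\<omega>\<in>space (M N).
           (SUP x\<in>sphereN N. ereal (F N \<omega> x)) \<ge> ereal (c * real N powr (1/2 + \<delta>))}
        \<le> K * exp (- f * real N powr (1 + 2*\<delta>))"
        proof (intro exI[of _ "K' + Ks"] allI impI)
          fix N :: nat assume N: "N \<ge> 1"
          define T where "T = real N powr (1 + 2*\<delta>)"
          define t where "t = c * real N powr (1/2 + \<delta>)"
          have T0: "T \<ge> 0" by (simp add: T_def)
          have Ks0: "Ks \<ge> 0" unfolding Ks_def by (intro sum_nonneg) auto
          show "outer_prob (M N) {\<omega>\<in>space (M N).
           (SUP x\<in>sphereN N. ereal (F N \<omega> x)) \<ge> ereal (c * real N powr (1/2 + \<delta>))}
            \<le> (K' + Ks) * exp (- f * real N powr (1 + 2*\<delta>))"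
          proof (cases "N < N0")
            case True
            have "exp (f * T) \<le> Ks" unfolding Ks_def T_def
              using True by (intro member_le_sum) auto
            then have "1 \<le> Ks * exp (- f * T)"
              by (simp add: exp_minus field_simps)
            also have "\<dots> \<le> (K' + Ks) * exp (- f * T)" using K'p by (intro mult_right_mono) auto
            finally show ?thesis unfolding T_def by (rule order.trans[OF op_le_1[OF prob[OF N]]])
          next
            case False
            then have "real N \<ge> X" unfolding N0_def by linarith
            then have NX: "real N powr \<delta> \<ge> 4 * \<bar>C\<bar> / c" by (rule X)
            have t: "t > 0" using c N by (simp add: t_def)
            have tsplit: "t = c * sqrt (real N) * real N powr \<delta>"
              unfolding t_def using N by (simp add: powr_add powr_half_sqrt)
            have "\<bar>C\<bar> * sqrt (real N) \<le> (c/4 * real N powr \<delta>) * sqrt (real N)"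
              using NX c by (intro mult_right_mono) (auto simp: field_simps)
            then have Ct: "\<bar>C\<bar> * sqrt (real N) \<le> t/4" unfolding tsplit by (simp add: algebra_simps)
            have EN: "E N \<le> t/4"
            proof -
              have "E N \<le> \<bar>E N\<bar>" by simp
              also have "\<dots> \<le> C * sqrt (real N)" using C[rule_format, OF N] unfolding E_def by simp
              also have "\<dots> \<le> \<bar>C\<bar> * sqrt (real N)" by (intro mult_right_mono) auto
              finally show ?thesis using Ct by linarith
            qed
            have t2: "t/4 = (c/4) * real N powr (1/2 + \<delta>)" "t^2/4 = (c^2/4) * real N powr (1 + 2*\<delta>)"
              using pw[OF N, of \<delta>] by (simp_all add: t_def power_mult_distrib)
            have PN: "finite (Pn N)" "Pn N \<subseteq> sphereN N"
               "\<forall>x\<in>sphereN N. \<exists>p\<in>Pn N. overlap N x p \<ge> 1 - real N powr (-\<alpha>)"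
               "real (card (Pn N)) \<le> exp (real N * (ln 7 + (1+\<alpha>)/2 * ln (real N)))" using Pn[rule_format, OF N] by simp_all
            have nn: "AE \<omega> in M N. \<forall>x\<in>sphereN N. F N \<omega> x \<ge> 0" by (rule NN[rule_format, OF N])
            have ev: "{\<omega>\<in>space (M N). t/4 \<le> \<bar>F N \<omega> (northpole N) - E N\<bar>} \<in> sets (M N)"
              by (rule ev_sets[OF iso[OF N] northpole_sphere[OF N]])
            have "outer_prob (M N) {\<omega>\<in>space (M N).
             (SUP x\<in>sphereN N. ereal (F N \<omega> x)) \<ge> ereal t}
              \<le> real (card (Pn N)) * measure (M N) {\<omega>\<in>space (M N). t/4 \<le> \<bar>F N \<omega> (northpole N) - E N\<bar>}
               + outer_prob (M N) {\<omega>\<in>space (M N). (SUP (x,y)\<in>{(x,y). x \<in> sphereN N \<and> y \<in> sphereN N \<and>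
                               overlap N x y \<ge> 1 - real N powr (-\<alpha>)}.
                 ereal \<bar>(F N \<omega> x)^2 - (F N \<omega> y)^2\<bar>) \<ge> ereal (t^2/4)}"
              by (rule cover2[OF iso[OF N] N t EN nn PN(1-3)])
            also have "measure (M N) {\<omega>\<in>space (M N). t/4 \<le> \<bar>F N \<omega> (northpole N) - E N\<bar>}
                = outer_prob (M N) {\<omega>\<in>space (M N). t/4 \<le> \<bar>F N \<omega> (northpole N) - E N\<bar>}"
              by (rule op_meas_eq[OF prob[OF N] ev, symmetric])
            also have "\<dots> \<le> K1 * exp (- c1 * T)" unfolding t2 T_def E_def by (rule K1[rule_format, OF N])
            also have "outer_prob (M N) {\<omega>\<in>space (M N). (SUP (x,y)\<in>{(x,y). x \<in> sphereN N \<and> y \<in> sphereN N \<and>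
                               overlap N x y \<ge> 1 - real N powr (-\<alpha>)}.
                 ereal \<bar>(F N \<omega> x)^2 - (F N \<omega> y)^2\<bar>) \<ge> ereal (t^2/4)} \<le> K2 * exp (- c2 * T)"
              unfolding t2 T_def by (rule K2[rule_format, OF N])
            finally have main: "outer_prob (M N) {\<omega>\<in>space (M N).
             (SUP x\<in>sphereN N. ereal (F N \<omega> x)) \<ge> ereal t}
              \<le> real (card (Pn N)) * (K1 * exp (- c1 * T)) + K2 * exp (- c2 * T)"
              by (simp add: mult_left_mono)
            have "real (card (Pn N)) * (K1 * exp (- c1 * T))
                \<le> exp (real N * (ln 7 + (1+\<alpha>)/2 * ln (real N))) * (K1 * exp (- c1 * T))"
              using PN(4) K1p by (intro mult_right_mono) auto
            also have "\<dots> = K1 * exp (real N * (ln 7 + (1+\<alpha>)/2 * ln (real N)) - (c1/2) * T) * exp (- (c1/2) * T)"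
              by (simp add: exp_add[symmetric] algebra_simps)
            also have "\<dots> \<le> K1 * exp G * exp (- f * T)"
            proof -
              have "exp (real N * (ln 7 + (1+\<alpha>)/2 * ln (real N)) - (c1/2) * T) \<le> exp G"
                using G[rule_format, OF N] unfolding T_def by simp
              moreover have "exp (- (c1/2) * T) \<le> exp (- f * T)"
                using mult_right_mono[OF fle(1) T0] by simp
              ultimately show ?thesis using K1p by (intro mult_mono) auto
            qed
            finally have A1: "real (card (Pn N)) * (K1 * exp (- c1 * T)) \<le> K1 * exp G * exp (- f * T)" .
            have A2: "K2 * exp (- c2 * T) \<le> K2 * exp (- f * T)"
              using K2p mult_right_mono[OF fle(2) T0] by (intro mult_left_mono) auto
            have "Ks * exp (- f * T) \<ge> 0" using Ks0 by simp
            then have "outer_prob (M N) {\<omega>\<in>space (M N).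
             (SUP x\<in>sphereN N. ereal (F N \<omega> x)) \<ge> ereal t} \<le> (K' + Ks) * exp (- f * T)"
              using main A1 A2 unfolding K'_def by (simp add: algebra_simps)
            then show ?thesis unfolding t_def T_def .
          qed
        qed
      qed
    qed
  qed
  show ?thesis by (rule conjI[OF part1 part2])
qed


end
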